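(* Let $G$ be a finite simple connected graph and let $k,l$ be integers with $2\le k\le l\le |V(G)|$. Then $\kappa_k^*(G)\geq \kappa_l^*(G)$.
   Context: For $S\subseteq V(G)$ with $|S|\ge 2$, an $S$-Steiner tree of $G$ is a subtree $T$ of $G$ with $S\subseteq V(T)$ all of whose leaves belong to $S$. A family of $S$-Steiner trees $T_1,\dots,T_k$ is completely independent if for all $1\le p<q\le k$: $E(T_p)\cap E(T_q)=\emptyset$, $V(T_p)\cap V(T_q)=S$, and for any two vertices $x_1,x_2\in S$ the $(x_1,x_2)$-paths in $T_p$ and in $T_q$ are internally disjoint. $\kappa^*_G(S)$ is the maximum number of trees in a completely independent family of $S$-Steiner trees in $G$, and the generalized $k^*$-connectivity is $\kappa_k^*(G)=\min\{\kappa^*_G(S): S\subseteq V(G),\ |S|=k\}$. *)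

theory Defs
  imports Main
begin

definition simple_graph :: "'a set \<Rightarrow> 'a set set \<Rightarrow> bool" where
  "simple_graph V E \<longleftrightarrow> finite V \<and> (\<forall>e\<in>E. card e = 2 \<and> e \<subseteq> V)"

definition is_path :: "'a set set \<Rightarrow> 'a list \<Rightarrow> 'a \<Rightarrow> 'a \<Rightarrow> bool" where
  "is_path F p x y \<longleftrightarrow> p \<noteq> [] \<and> hd p = x \<and> last p = y \<and> distinct p \<and>
     (\<forall>i. Suc i < length p \<longrightarrow> {p ! i, p ! Suc i} \<in> F)"

definition internal_vertices :: "'a list \<Rightarrow> 'a set" where
  "internal_vertices p = set (butlast (tl p))"

definition graph_connected :: "'a set \<Rightarrow> 'a set set \<Rightarrow> bool" where
  "graph_connected V E \<longleftrightarrow> (\<forall>x\<in>V. \<forall>y\<in>V. \<exists>p. is_path E p x y \<and> set p \<subseteq> V)"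

definition is_cycle :: "'a set set \<Rightarrow> 'a list \<Rightarrow> bool" where
  "is_cycle F c \<longleftrightarrow> length c \<ge> 3 \<and> distinct c \<and>
     (\<forall>i. Suc i < length c \<longrightarrow> {c ! i, c ! Suc i} \<in> F) \<and> {last c, hd c} \<in> F"

definition is_tree :: "'a set \<Rightarrow> 'a set set \<Rightarrow> bool" where
  "is_tree VT ET \<longleftrightarrow> VT \<noteq> {} \<and> (\<forall>e\<in>ET. e \<subseteq> VT) \<and> graph_connected VT ET
     \<and> (\<nexists>c. is_cycle ET c)"

definition leaves :: "'a set \<Rightarrow> 'a set set \<Rightarrow> 'a set" where
  "leaves VT ET = {v \<in> VT. card {e \<in> ET. v \<in> e} = 1}"

definition steiner_tree :: "'a set \<Rightarrow> 'a set set \<Rightarrow> 'a set \<Rightarrow> 'a set \<times> 'a set set \<Rightarrow> bool" where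
  "steiner_tree V E S T \<longleftrightarrow> fst T \<subseteq> V \<and> snd T \<subseteq> E \<and> is_tree (fst T) (snd T)
     \<and> S \<subseteq> fst T \<and> leaves (fst T) (snd T) \<subseteq> S"

definition completely_independent ::
  "'a set \<Rightarrow> 'a set set \<Rightarrow> 'a set \<Rightarrow> nat \<Rightarrow> (nat \<Rightarrow> 'a set \<times> 'a set set) \<Rightarrow> bool" where
  "completely_independent V E S k T \<longleftrightarrow>
     (\<forall>i<k. steiner_tree V E S (T i)) \<and>
     (\<forall>p q. p < q \<and> q < k \<longrightarrow>
        snd (T p) \<inter> snd (T q) = {} \<and> fst (T p) \<inter> fst (T q) = S \<and>
        (\<forall>x1\<in>S. \<forall>x2\<in>S. \<forall>P Q. is_path (snd (T p)) P x1 x2 \<and> is_path (snd (T q)) Q x1 x2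
             \<longrightarrow> internal_vertices P \<inter> internal_vertices Q = {}))"

definition kappa_star_S :: "'a set \<Rightarrow> 'a set set \<Rightarrow> 'a set \<Rightarrow> nat" where
  "kappa_star_S V E S = Max {k. \<exists>T. completely_independent V E S k T}"

definition kappa_star :: "'a set \<Rightarrow> 'a set set \<Rightarrow> nat \<Rightarrow> nat" where
  "kappa_star V E k = Min {kappa_star_S V E S | S. S \<subseteq> V \<and> card S = k}"

end

theory Submission
  imports Defs
begin

definition adj :: "'a set set \<Rightarrow> 'a \<Rightarrow> 'a \<Rightarrow> bool" where
  "adj F a b \<longleftrightarrow> {a,b} \<in> F"

lemma adj_sym: "adj F a b = adj F b a"
  by (simp add: adj_def insert_commute)

lemma adj_sym': "(\<lambda>x y. adj F y x) = adj F"
  using adj_sym by fastforce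

lemma is_path_succ: "is_path F p x y \<longleftrightarrow> p \<noteq> [] \<and> hd p = x \<and> last p = y \<and> distinct p \<and>
   successively (adj F) p"
  unfolding is_path_def successively_conv_nth adj_def by simp

lemma is_cycle_succ: "is_cycle F c \<longleftrightarrow> length c \<ge> 3 \<and> distinct c \<and>
   successively (adj F) c \<and> adj F (last c) (hd c)"
  unfolding is_cycle_def successively_conv_nth adj_def by simp

lemma is_path_single: "is_path F [x] x x"
  by (simp add: is_path_succ)

lemma succ_adj_rev: "successively (\<lambda>x y. adj F y x) p = successively (adj F) p"
  by (simp add: adj_def insert_commute)

lemma is_path_rev: "is_path F p x y \<Longrightarrow> is_path F (rev p) y x"
  by (simp add: is_path_succ succ_adj_rev hd_rev last_rev)

lemma last_take_Suc: "i < length p \<Longrightarrow> last (take (Suc i) p) = p ! i"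
  by (subst last_conv_nth) (auto simp: min_def intro: arg_cong[where f="(!) p"])

lemma successively_take: "successively P xs \<Longrightarrow> successively P (take n xs)"
  by (metis append_take_drop_id successively_append_iff)

lemma is_path_take: "is_path F p x y \<Longrightarrow> i < length p \<Longrightarrow> is_path F (take (Suc i) p) x (p!i)"
  by (auto simp: is_path_succ successively_take hd_take last_take_Suc)

lemma is_path_mono: "F \<subseteq> F' \<Longrightarrow> is_path F p x y \<Longrightarrow> is_path F' p x y"
  unfolding is_path_def by blast

lemma is_path_extend:
  assumes "is_path F p x y" "{y,z} \<in> F"
  shows "\<exists>r. is_path F r x z \<and> set r \<subseteq> insert z (set p)"
proof (cases "z \<in> set p")
  case True
  then obtain i where "i < length p" "p ! i = z" by (metis in_set_conv_nth)
  then show ?thesis using is_path_take[OF assms(1)] by (metis insert_iff set_take_subset subsetI subset_iff)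
next
  case False
  have "is_path F (p @ [z]) x z" using assms False
    by (auto simp: is_path_succ successively_append_iff adj_def)
  then show ?thesis by auto
qed

lemma is_path_append:
  "is_path F q y z \<Longrightarrow> is_path F p x y \<Longrightarrow> \<exists>r. is_path F r x z \<and> set r \<subseteq> set p \<union> set q"
proof (induction q arbitrary: z rule: rev_induct)
  case Nil
  then show ?case by (simp add: is_path_def)
next
  case (snoc w q)
  show ?case
  proof (cases "q = []")
    case True
    then show ?thesis using snoc by (auto simp: is_path_def)
  next
    case False
    have "is_path F q y (last q)" using snoc.prems False
      by (auto simp: is_path_succ successively_append_iff)
    from snoc.IH[OF this snoc.prems(2)] obtain r where r: "is_path F r x (last q)" "set r \<subseteq> set p \<union> set q" by blast
    have "{last q, z} \<in> F" using snoc.prems False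
      by (auto simp: is_path_succ successively_append_iff adj_def)
    from is_path_extend[OF r(1) this] obtain r' where "is_path F r' x z" "set r' \<subseteq> insert z (set r)" by blast
    moreover have "z = w" using snoc.prems by (simp add: is_path_def)
    ultimately show ?thesis using r(2) by auto
  qed
qed

lemma is_path_Cons: "is_path F r b y \<Longrightarrow> adj F a b \<Longrightarrow> a \<notin> set r \<Longrightarrow> is_path F (a # r) a y"
  by (cases r) (auto simp: is_path_succ)

lemma is_path_Cons2: "is_path F (a # b # r) x y \<longleftrightarrow> x = a \<and> adj F a b \<and> a \<notin> set (b#r) \<and> is_path F (b#r) b y"
  by (auto simp: is_path_succ)

lemma is_path_same: "is_path F q a a \<Longrightarrow> q = [a]"
  by (cases q) (auto simp: is_path_def split: if_splits)

lemma cycle_of_paths: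
  assumes "is_path F xs a z" "is_path F ys z w" "set xs \<inter> set ys = {z}" "adj F w a"
    "length xs + length ys \<ge> 4"
  shows "is_cycle F (xs @ tl ys)"
proof -
  obtain ys' where ys: "ys = z # ys'" using assms(2) by (cases ys) (auto simp: is_path_def)
  have d: "distinct (xs @ ys')" using assms(1,2,3) ys by (auto simp: is_path_def)
  have s: "successively (adj F) (xs @ ys')" using assms(1,2) ys
    by (auto simp: is_path_succ successively_append_iff successively_Cons)
  have l: "adj F (last (xs @ ys')) (hd (xs @ ys'))" using assms ys
    by (cases "ys' = []") (auto simp: is_path_def)
  show ?thesis using d s l assms(5) ys by (auto simp: is_cycle_succ)
qed

lemma tree_path_unique:
  assumes nc: "\<not>(\<exists>c. is_cycle F c)"
  shows "is_path F p a b \<Longrightarrow> is_path F q a b \<Longrightarrow> p = q"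
proof (induction p arbitrary: a q)
  case Nil
  then show ?case by (simp add: is_path_def)
next
  case (Cons a' p')
  have a': "a' = a" using Cons.prems by (simp add: is_path_def)
  show ?case
  proof (cases p')
    case Nil
    then have "a = b" using Cons.prems a' by (simp add: is_path_def)
    then show ?thesis using Cons.prems is_path_same by metis
  next
    case (Cons u p'')
    obtain w q'' where q: "q = a # w # q''"
    proof -
      obtain q' where q1: "q = a # q'" using Cons.prems(2) by (cases q) (auto simp: is_path_def)
      show ?thesis
      proof (cases q')
        case Nil
        then have "a = b" using q1 Cons.prems(2) by (simp add: is_path_def)
        then have "a' # p' = [a]" using Cons.prems(1) is_path_same by metis
        then show ?thesis using Cons by simp
      next
        case (Cons w q'')
        then show ?thesis using q1 that by simp
      qed
    qed
    have pp: "is_path F (u # p'') u b" "adj F a u" "a \<notin> set (u # p'')"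
      using Cons.prems(1) a' Cons by (auto simp: is_path_Cons2)
    have qq: "is_path F (w # q'') w b" "adj F a w" "a \<notin> set (w # q'')"
      using Cons.prems(2) q by (auto simp: is_path_Cons2)
    show ?thesis
    proof (cases "u = w")
      case True
      then show ?thesis using Cons.IH[of u "w # q''"] pp qq q a' \<open>p' = u # p''\<close> by simp
    next
      case False
      define P where "P = u # p''"
      define Q where "Q = w # q''"
      have P: "is_path F P u b" "a \<notin> set P" "adj F a u" using pp P_def by auto
      have Q: "is_path F Q w b" "a \<notin> set Q" "adj F a w" using qq Q_def by auto
      define j where "j = (LEAST j. j < length P \<and> P ! j \<in> set Q)"
      have ex: "length P - 1 < length P \<and> P ! (length P - 1) \<in> set Q"
      proof -
        have "last P = last Q" "P \<noteq> []" "Q \<noteq> []" using P(1) Q(1) by (auto simp: is_path_def)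
        then show ?thesis by (metis last_conv_nth last_in_set diff_less zero_less_one length_greater_0_conv)
      qed
      have j: "j < length P" "P ! j \<in> set Q"
        using LeastI_ex[of "\<lambda>j. j < length P \<and> P ! j \<in> set Q"] ex unfolding j_def by blast+
      have jmin: "P ! i \<notin> set Q" if "i < j" for i
        using not_less_Least[of i "\<lambda>j. j < length P \<and> P ! j \<in> set Q"] that j(1) unfolding j_def
        by auto
      define z where "z = P ! j"
      obtain m where m: "m < length Q" "Q ! m = z" using j(2) z_def by (metis in_set_conv_nth)
      define xs where "xs = a # take (Suc j) P"
      define ys where "ys = rev (take (Suc m) Q)"
      have xs: "is_path F xs a z"
        unfolding xs_def z_def
        apply (rule is_path_Cons[where b=u])
        using is_path_take[OF P(1) j(1)] P(2,3) by (auto dest: in_set_takeD)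
      have ys: "is_path F ys z w" unfolding ys_def
        using is_path_rev[OF is_path_take[OF Q(1) m(1)]] m(2) by simp
      have tk: "take (Suc j) P = take j P @ [z]" using j(1) z_def by (simp add: take_Suc_conv_app_nth)
      have tkQ: "set (take j P) \<inter> set Q = {}" using jmin
      proof -
        have "x \<notin> set Q" if xin: "x \<in> set (take j P)" for x
        proof -
          obtain i where "i < length (take j P)" "take j P ! i = x" using xin unfolding in_set_conv_nth by blast
          then show ?thesis using jmin[of i] by auto
        qed
        then show ?thesis by blast
      qed
      have "set ys \<subseteq> set Q" unfolding ys_def by (auto dest: in_set_takeD)
      moreover have "z \<in> set ys" using ys unfolding is_path_def using hd_in_set by blast
      ultimately have int: "set xs \<inter> set ys = {z}" unfolding xs_def using tk tkQ Q(2) by auto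
      have len: "length xs + length ys \<ge> 4"
      proof -
        have "j \<noteq> 0 \<or> m \<noteq> 0"
        proof (rule ccontr)
          assume "\<not> (j \<noteq> 0 \<or> m \<noteq> 0)"
          then have "z = u" "z = w" using z_def m(2) P_def Q_def by auto
          then show False using False by simp
        qed
        then show ?thesis unfolding xs_def ys_def using j(1) m(1) by auto
      qed
      have "is_cycle F (xs @ tl ys)"
        using cycle_of_paths[OF xs ys int _ len] Q(3) adj_sym by metis
      then show ?thesis using nc by blast
    qed
  qed
qed

definition pedges :: "'a list \<Rightarrow> 'a set set" where
  "pedges P = {{P!i, P!Suc i} | i. Suc i < length P}"

definition Spaths :: "'a set \<times> 'a set set \<Rightarrow> 'a set \<Rightarrow> 'a list set" where
  "Spaths T S = {P. \<exists>x\<in>S. \<exists>y\<in>S. is_path (snd T) P x y}"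

definition prune :: "'a set \<Rightarrow> 'a set \<times> 'a set set \<Rightarrow> 'a set \<times> 'a set set" where
  "prune S T = (\<Union>P\<in>Spaths T S. set P, \<Union>P\<in>Spaths T S. pedges P)"

lemma pedges_sub: "is_path F P x y \<Longrightarrow> pedges P \<subseteq> F"
  unfolding is_path_def pedges_def by auto

lemma is_path_pedges: "is_path F P x y \<Longrightarrow> is_path (pedges P) P x y"
  unfolding is_path_def pedges_def by auto

lemma is_cycle_mono: "F \<subseteq> F' \<Longrightarrow> is_cycle F c \<Longrightarrow> is_cycle F' c"
  unfolding is_cycle_def by blast

lemma path_vertices:
  assumes "is_path F P x y" "\<forall>e\<in>F. e \<subseteq> W" "x \<in> W"
  shows "set P \<subseteq> W"
proof
  fix u assume "u \<in> set P"
  then obtain i where i: "i < length P" "P ! i = u" by (metis in_set_conv_nth)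
  show "u \<in> W"
  proof (cases i)
    case 0
    then show ?thesis using i assms(1,3) by (auto simp: is_path_def hd_conv_nth)
  next
    case (Suc j)
    then have "{P!j, P!Suc j} \<in> F" using i assms(1) by (auto simp: is_path_def)
    then show ?thesis using assms(2) i Suc by auto
  qed
qed

lemma internal_mem:
  assumes "is_path F P a b" "v \<in> set P" "v \<noteq> a" "v \<noteq> b"
  shows "v \<in> internal_vertices P"
proof -
  obtain P' where P: "P = a # P'" using assms(1) by (cases P) (auto simp: is_path_def)
  have "v \<in> set P'" using assms(2,3) P by auto
  then have "P' \<noteq> []" by auto
  have "last P' = b" using assms(1) P \<open>P' \<noteq> []\<close> by (auto simp: is_path_def)
  then have "v \<in> set (butlast P')" using \<open>v \<in> set P'\<close> assms(4) \<open>P' \<noteq> []\<close>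
    by (metis append_butlast_last_id in_set_conv_decomp rotate1.simps(2) set_ConsD set_rotate1)
  then show ?thesis unfolding internal_vertices_def P by simp
qed

lemma prune_steiner:
  assumes st: "steiner_tree V E S' T" and SS: "S \<subseteq> S'" and ne: "S \<noteq> {}"
  shows "steiner_tree V E S (prune S T)"
proof -
  obtain VT ET where T: "T = (VT, ET)" by (cases T)
  have tr: "is_tree VT ET" and VTV: "VT \<subseteq> V" and ETE: "ET \<subseteq> E" and SVT: "S \<subseteq> VT"
    using st SS T by (auto simp: steiner_tree_def)
  have ev: "\<forall>e\<in>ET. e \<subseteq> VT" and con: "graph_connected VT ET" and nc: "\<not>(\<exists>c. is_cycle ET c)"
    using tr by (auto simp: is_tree_def)
  define VT' where "VT' = (\<Union>P\<in>Spaths T S. set P)"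
  define ET' where "ET' = (\<Union>P\<in>Spaths T S. pedges P)"
  have pr: "prune S T = (VT', ET')" unfolding prune_def VT'_def ET'_def by simp
  have sp: "P \<in> Spaths T S \<longleftrightarrow> (\<exists>x\<in>S. \<exists>y\<in>S. is_path ET P x y)" for P
    unfolding Spaths_def T by simp
  have spI: "P \<in> Spaths T S" if "x \<in> S" "y \<in> S" "is_path ET P x y" for P x y
    using that sp by blast
  have spE: "\<exists>x y. x \<in> S \<and> y \<in> S \<and> is_path ET P x y" if "P \<in> Spaths T S" for P
    using that sp by blast
  have VT'sub: "VT' \<subseteq> VT"
  proof
    fix u assume "u \<in> VT'"
    then obtain P x y where "x \<in> S" "y \<in> S" "is_path ET P x y" "u \<in> set P"
      using spE unfolding VT'_def by blast
    then show "u \<in> VT" using path_vertices[of ET P x y VT] ev SVT by blast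
  qed
  have ET'sub: "ET' \<subseteq> ET"
  proof
    fix e assume "e \<in> ET'"
    then obtain P where P: "P \<in> Spaths T S" "e \<in> pedges P" unfolding ET'_def by blast
    then obtain x y where xy: "is_path ET P x y" using spE by blast
    show "e \<in> ET" using pedges_sub[OF xy] P(2) by blast
  qed
  have SVT': "S \<subseteq> VT'"
  proof
    fix x assume "x \<in> S"
    then have "[x] \<in> Spaths T S" using spI[OF _ _ is_path_single] by blast
    then show "x \<in> VT'" unfolding VT'_def by force
  qed
  have ev': "\<forall>e\<in>ET'. e \<subseteq> VT'"
  proof
    fix e assume "e \<in> ET'"
    then obtain P where P: "P \<in> Spaths T S" "e \<in> pedges P" unfolding ET'_def by blast
    then have "e \<subseteq> set P" unfolding pedges_def by auto
    then show "e \<subseteq> VT'" using P(1) unfolding VT'_def by blast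
  qed
  have Spath': "is_path ET' P x y \<and> set P \<subseteq> VT'" if "P \<in> Spaths T S" "is_path ET P x y" for P x y
  proof -
    have "pedges P \<subseteq> ET'" using that(1) unfolding ET'_def by blast
    then have "is_path ET' P x y" using is_path_mono[OF _ is_path_pedges[OF that(2)]] by blast
    moreover have "set P \<subseteq> VT'" using that(1) unfolding VT'_def by blast
    ultimately show ?thesis by blast
  qed
  have toS: "\<exists>x\<in>S. \<exists>R. is_path ET' R u x \<and> set R \<subseteq> VT'" if uin: "u \<in> VT'" for u
  proof -
    obtain P x y where P: "x \<in> S" "y \<in> S" "is_path ET P x y" "u \<in> set P"
      using uin spE unfolding VT'_def by blast
    have Pin: "P \<in> Spaths T S" using P spI by blast
    obtain i where i: "i < length P" "P ! i = u" using P(4) by (metis in_set_conv_nth)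
    have "is_path ET' P x y" "set P \<subseteq> VT'" using Spath'[OF Pin P(3)] by auto
    then have "is_path ET' (rev (take (Suc i) P)) u x" "set (rev (take (Suc i) P)) \<subseteq> VT'"
      using is_path_rev[OF is_path_take[OF _ i(1)]] i(2) by (auto dest: in_set_takeD)
    then show ?thesis using P(1) by blast
  qed
  have con': "graph_connected VT' ET'"
    unfolding graph_connected_def
  proof (intro ballI)
    fix u w assume u: "u \<in> VT'" and w: "w \<in> VT'"
    obtain x1 R1 where R1: "x1 \<in> S" "is_path ET' R1 u x1" "set R1 \<subseteq> VT'" using toS[OF u] by blast
    obtain x2 R2 where R2: "x2 \<in> S" "is_path ET' R2 w x2" "set R2 \<subseteq> VT'" using toS[OF w] by blast
    obtain M where M: "is_path ET M x1 x2" "set M \<subseteq> VT" using con R1(1) R2(1) SVT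
      unfolding graph_connected_def by blast
    have "M \<in> Spaths T S" using M R1(1) R2(1) spI by blast
    then have M': "is_path ET' M x1 x2" "set M \<subseteq> VT'" using Spath' M(1) by blast+
    obtain N where N: "is_path ET' N u x2" "set N \<subseteq> set R1 \<union> set M"
      using is_path_append[OF M'(1) R1(2)] by blast
    obtain K where K: "is_path ET' K u w" "set K \<subseteq> set N \<union> set (rev R2)"
      using is_path_append[OF is_path_rev[OF R2(2)] N(1)] by blast
    show "\<exists>p. is_path ET' p u w \<and> set p \<subseteq> VT'"
    proof (intro exI conjI)
      show "is_path ET' K u w" by (rule K(1))
      have a1: "set K \<subseteq> set N \<union> set R2" using K(2) by simp
      have a2: "set N \<subseteq> VT'" using N(2) R1(3) M'(2) by blast
      show "set K \<subseteq> VT'" using a1 a2 R2(3) by blast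
    qed
  qed
  have nc': "\<not>(\<exists>c. is_cycle ET' c)" using nc is_cycle_mono[OF ET'sub] by blast
  have tr': "is_tree VT' ET'" unfolding is_tree_def using ne SVT' ev' con' nc' by blast
  have lv: "leaves VT' ET' \<subseteq> S"
  proof
    fix u assume ul: "u \<in> leaves VT' ET'"
    show "u \<in> S"
    proof (rule ccontr)
      assume uS: "u \<notin> S"
      obtain P x y where P: "x \<in> S" "y \<in> S" "is_path ET P x y" "u \<in> set P"
        using ul spE unfolding leaves_def VT'_def by blast
      have Pin: "P \<in> Spaths T S" using P spI by blast
      obtain i where i: "i < length P" "P ! i = u" using P(4) by (metis in_set_conv_nth)
      have "i \<noteq> 0"
      proof
        assume "i = 0" then show False using i P(1,3) uS by (auto simp: is_path_def hd_conv_nth)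
      qed
      moreover have "Suc i \<noteq> length P"
      proof
        assume a: "Suc i = length P"
        have "last P = P ! i" using a[symmetric] P(3) by (auto simp: is_path_def last_conv_nth)
        then show False using i P(2,3) uS by (auto simp: is_path_def)
      qed
      ultimately obtain j where j: "i = Suc j" "Suc (Suc j) < length P" using i(1)
        by (metis Suc_lessI not0_implies_Suc)
      have dP: "distinct P" using P(3) by (simp add: is_path_def)
      have ne1: "P ! j \<noteq> P ! Suc (Suc j)" "P ! j \<noteq> u" "P ! Suc (Suc j) \<noteq> u"
        using dP j i by (auto simp: nth_eq_iff_index_eq)
      define e1 where "e1 = {P ! j, P ! Suc j}"
      define e2 where "e2 = {P ! Suc j, P ! Suc (Suc j)}"
      have "e1 \<in> pedges P" "e2 \<in> pedges P" unfolding e1_def e2_def pedges_def using j by auto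
      then have "e1 \<in> ET'" "e2 \<in> ET'" using Pin unfolding ET'_def by blast+
      moreover have "u \<in> e1" "u \<in> e2" unfolding e1_def e2_def using i j by auto
      moreover have "e1 \<noteq> e2" unfolding e1_def e2_def using ne1 i j by auto
      ultimately have two: "e1 \<in> {e \<in> ET'. u \<in> e}" "e2 \<in> {e \<in> ET'. u \<in> e}" "e1 \<noteq> e2" by auto
      have "card {e \<in> ET'. u \<in> e} = 1" using ul unfolding leaves_def by simp
      then obtain e0 where "{e \<in> ET'. u \<in> e} = {e0}" by (meson card_1_singletonE)
      then show False using two by auto
    qed
  qed
  show ?thesis unfolding steiner_tree_def pr using VT'sub VTV ET'sub ETE tr' SVT' lv by auto
qed

lemma sep_split:
  assumes tr: "is_tree VT ET" and P: "is_path ET P x y" "v \<in> set P"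
    and xa: "x \<in> VT" "y \<in> VT" "a \<in> VT"
  shows "(\<exists>A. is_path ET A x a \<and> v \<in> set A) \<or> (\<exists>B. is_path ET B a y \<and> v \<in> set B)"
proof (rule ccontr)
  assume c: "\<not> ?thesis"
  have con: "graph_connected VT ET" and nc: "\<not>(\<exists>c. is_cycle ET c)" using tr by (auto simp: is_tree_def)
  obtain A where A: "is_path ET A x a" using con xa unfolding graph_connected_def by blast
  obtain B where B: "is_path ET B a y" using con xa unfolding graph_connected_def by blast
  have "v \<notin> set A" "v \<notin> set B" using A B c by auto
  obtain R where R: "is_path ET R x y" "set R \<subseteq> set A \<union> set B" using is_path_append[OF B A] by blast
  have "R = P" using tree_path_unique[OF nc R(1) P(1)] .
  then show False using R(2) P(2) \<open>v \<notin> set A\<close> \<open>v \<notin> set B\<close> by auto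
qed

lemma sep_sym: "is_path F A x y \<and> v \<in> set A \<Longrightarrow> \<exists>B. is_path F B y x \<and> v \<in> set B"
  using is_path_rev by fastforce

lemma not_both:
  assumes ci: "completely_independent V E (insert v S) m T" and vS: "v \<notin> S"
    and pq: "p < m" "q < m" "p \<noteq> q"
    and vp: "v \<in> fst (prune S (T p))" and vq: "v \<in> fst (prune S (T q))"
  shows False
proof -
  define sp where "sp a b = (\<exists>A. is_path (snd (T p)) A a b \<and> v \<in> set A)" for a b
  define sq where "sq a b = (\<exists>A. is_path (snd (T q)) A a b \<and> v \<in> set A)" for a b
  have stp: "steiner_tree V E (insert v S) (T p)" and stq: "steiner_tree V E (insert v S) (T q)"
    using ci pq unfolding completely_independent_def by auto
  have trp: "is_tree (fst (T p)) (snd (T p))" and Sp: "S \<subseteq> fst (T p)" using stp by (auto simp: steiner_tree_def)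
  have trq: "is_tree (fst (T q)) (snd (T q))" and Sq: "S \<subseteq> fst (T q)" using stq by (auto simp: steiner_tree_def)
  have splp: "sp a c \<or> sp c b" if "sp a b" "a \<in> S" "b \<in> S" "c \<in> S" for a b c
    using that sep_split[OF trp, of _ a b v c] Sp unfolding sp_def by blast
  have splq: "sq a c \<or> sq c b" if "sq a b" "a \<in> S" "b \<in> S" "c \<in> S" for a b c
    using that sep_split[OF trq, of _ a b v c] Sq unfolding sq_def by blast
  have symp: "sp b a" if "sp a b" for a b using that sep_sym unfolding sp_def by metis
  have symq: "sq b a" if "sq a b" for a b using that sep_sym unfolding sq_def by metis
  obtain x y where xy: "x \<in> S" "y \<in> S" "sp x y"
    using vp unfolding prune_def Spaths_def sp_def by auto
  obtain x' y' where xy': "x' \<in> S" "y' \<in> S" "sq x' y'"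
    using vq unfolding prune_def Spaths_def sq_def by auto
  have "\<exists>a\<in>S. \<exists>b\<in>S. sp a b \<and> sq a b"
  proof -
    have "\<exists>a\<in>S. \<exists>b\<in>S. sp a b \<and> sq a b" if h: "sp x x'" "sq x' y'" "x \<in> S" "x' \<in> S" "y' \<in> S"
      for x x' y'
    proof -
      have "sq x' x \<or> sq x y'" using splq[OF h(2) h(4) h(5) h(3)] .
      moreover have "sp x y' \<or> sp y' x'" using splp[OF h(1) h(3) h(4) h(5)] .
      ultimately show ?thesis using h symp symq by blast
    qed
    moreover have "sp x x' \<or> sp x' y" using splp[OF xy(3) xy(1) xy(2) xy'(1)] .
    ultimately show ?thesis using xy xy' symp symq by blast
  qed
  then obtain a b A B where ab: "a \<in> S" "b \<in> S" "is_path (snd (T p)) A a b" "v \<in> set A"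
    "is_path (snd (T q)) B a b" "v \<in> set B" unfolding sp_def sq_def by blast
  have "a \<noteq> v" "b \<noteq> v" using ab vS by auto
  then have iv: "v \<in> internal_vertices A" "v \<in> internal_vertices B"
    using internal_mem ab by metis+
  have key: "\<forall>x1\<in>insert v S. \<forall>x2\<in>insert v S. \<forall>P Q. is_path (snd (T p')) P x1 x2 \<and> is_path (snd (T q')) Q x1 x2
             \<longrightarrow> internal_vertices P \<inter> internal_vertices Q = {}" if "p' < q'" "q' < m" for p' q'
    using ci that unfolding completely_independent_def by blast
  show False
  proof (cases "p < q")
    case True
    then show ?thesis using key[OF True pq(2)] ab iv by blast
  next
    case False
    then have qp: "q < p" using pq by simp
    show ?thesis using key[OF qp pq(1)] ab iv by blast
  qed
qed


lemma prune_subs: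
  shows "snd (prune S T) \<subseteq> snd T"
  unfolding prune_def Spaths_def using pedges_sub by fastforce

lemma prune_subv:
  assumes "is_tree (fst T) (snd T)" "S \<subseteq> fst T"
  shows "fst (prune S T) \<subseteq> fst T"
proof
  fix u assume "u \<in> fst (prune S T)"
  then obtain P x y where P: "x \<in> S" "is_path (snd T) P x y" "u \<in> set P"
    unfolding prune_def Spaths_def by auto
  show "u \<in> fst T" using path_vertices[OF P(2), of "fst T"] assms P unfolding is_tree_def by blast
qed

lemma prune_family:
  assumes ci: "completely_independent V E (insert v S) m T" and vS: "v \<notin> S" and ne: "S \<noteq> {}"
  shows "completely_independent V E S m (\<lambda>i. prune S (T i))"
proof -
  have st: "steiner_tree V E (insert v S) (T i)" if "i < m" for i
    using ci that unfolding completely_independent_def by blast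
  have st': "steiner_tree V E S (prune S (T i))" if "i < m" for i
    using prune_steiner[OF st[OF that] _ ne] by blast
  have Ssub: "S \<subseteq> fst (prune S (T i))" if "i < m" for i
    using st'[OF that] unfolding steiner_tree_def by (elim conjE)
  have vsub: "fst (prune S (T i)) \<subseteq> fst (T i)" if "i < m" for i
  proof -
    have "is_tree (fst (T i)) (snd (T i))" "S \<subseteq> fst (T i)"
      using st[OF that] unfolding steiner_tree_def by auto
    then show ?thesis by (rule prune_subv)
  qed
  have A: "\<forall>i<m. steiner_tree V E S (prune S (T i))" using st' by blast
  have B: "\<forall>p q. p < q \<and> q < m \<longrightarrow>
        snd (prune S (T p)) \<inter> snd (prune S (T q)) = {} \<and> fst (prune S (T p)) \<inter> fst (prune S (T q)) = S \<and>
        (\<forall>x1\<in>S. \<forall>x2\<in>S. \<forall>P Q. is_path (snd (prune S (T p))) P x1 x2 \<and> is_path (snd (prune S (T q))) Q x1 x2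
             \<longrightarrow> internal_vertices P \<inter> internal_vertices Q = {})"
  proof (intro allI impI)
    fix p q assume pq: "p < q \<and> q < m"
    have ind: "snd (T p) \<inter> snd (T q) = {} \<and> fst (T p) \<inter> fst (T q) = insert v S \<and>
        (\<forall>x1\<in>insert v S. \<forall>x2\<in>insert v S. \<forall>P Q. is_path (snd (T p)) P x1 x2 \<and> is_path (snd (T q)) Q x1 x2
             \<longrightarrow> internal_vertices P \<inter> internal_vertices Q = {})"
      using ci pq unfolding completely_independent_def by blast
    have g1: "snd (prune S (T p)) \<inter> snd (prune S (T q)) = {}"
      using ind prune_subs[of S "T p"] prune_subs[of S "T q"] by blast
    have nb: "v \<notin> fst (prune S (T p)) \<inter> fst (prune S (T q))"
      using not_both[OF ci vS, of p q] pq by auto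
    have g2: "fst (prune S (T p)) \<inter> fst (prune S (T q)) = S"
      using ind vsub[of p] vsub[of q] pq Ssub[of p] Ssub[of q] nb by auto
    have g3: "\<forall>x1\<in>S. \<forall>x2\<in>S. \<forall>P Q. is_path (snd (prune S (T p))) P x1 x2 \<and> is_path (snd (prune S (T q))) Q x1 x2
             \<longrightarrow> internal_vertices P \<inter> internal_vertices Q = {}"
    proof (intro ballI allI impI)
      fix x1 x2 P Q assume x: "x1 \<in> S" "x2 \<in> S"
        and PQ: "is_path (snd (prune S (T p))) P x1 x2 \<and> is_path (snd (prune S (T q))) Q x1 x2"
      have "is_path (snd (T p)) P x1 x2" "is_path (snd (T q)) Q x1 x2"
        using PQ is_path_mono[OF prune_subs] by (blast intro: is_path_mono[OF prune_subs])+
      then show "internal_vertices P \<inter> internal_vertices Q = {}" using ind x by blast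
    qed
    show "snd (prune S (T p)) \<inter> snd (prune S (T q)) = {} \<and> fst (prune S (T p)) \<inter> fst (prune S (T q)) = S \<and>
        (\<forall>x1\<in>S. \<forall>x2\<in>S. \<forall>P Q. is_path (snd (prune S (T p))) P x1 x2 \<and> is_path (snd (prune S (T q))) Q x1 x2
             \<longrightarrow> internal_vertices P \<inter> internal_vertices Q = {})" using g1 g2 g3 by blast
  qed
  show ?thesis unfolding completely_independent_def using A B by blast
qed

lemma ci_bound:
  assumes sg: "simple_graph V E" and xy: "x \<in> S" "y \<in> S" "x \<noteq> y"
    and ci: "completely_independent V E S k T"
  shows "k \<le> card E"
proof -
  have finE: "finite E"
  proof -
    have "E \<subseteq> Pow V" using sg unfolding simple_graph_def by blast
    moreover have "finite V" using sg unfolding simple_graph_def by blast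
    ultimately show ?thesis by (meson finite_Pow_iff finite_subset)
  qed
  have ne: "snd (T i) \<noteq> {}" if "i < k" for i
  proof -
    have st: "steiner_tree V E S (T i)" using ci that unfolding completely_independent_def by blast
    then have "graph_connected (fst (T i)) (snd (T i))" "x \<in> fst (T i)" "y \<in> fst (T i)"
      using xy unfolding steiner_tree_def is_tree_def by auto
    then obtain P where P: "is_path (snd (T i)) P x y" unfolding graph_connected_def by blast
    have "length P \<noteq> 1" using P xy(3) by (auto simp: is_path_def hd_conv_nth last_conv_nth)
    moreover have "P \<noteq> []" using P by (simp add: is_path_def)
    ultimately have "Suc 0 < length P" by (cases P) auto
    then have "{P!0, P!Suc 0} \<in> snd (T i)" using P unfolding is_path_def by blast
    then show ?thesis by blast
  qed
  define f where "f i = (SOME e. e \<in> snd (T i))" for i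
  have fi: "f i \<in> snd (T i)" if "i < k" for i
    unfolding f_def using ne[OF that] by (simp add: some_in_eq)
  have sub: "snd (T i) \<subseteq> E" if "i < k" for i
  proof -
    have "steiner_tree V E S (T i)" using ci that unfolding completely_independent_def by blast
    then show ?thesis unfolding steiner_tree_def by (elim conjE)
  qed
  have disj: "snd (T i) \<inter> snd (T j) = {}" if "i < j" "j < k" for i j
  proof -
    have "\<forall>p q. p < q \<and> q < k \<longrightarrow>
        snd (T p) \<inter> snd (T q) = {} \<and> fst (T p) \<inter> fst (T q) = S \<and>
        (\<forall>x1\<in>S. \<forall>x2\<in>S. \<forall>P Q. is_path (snd (T p)) P x1 x2 \<and> is_path (snd (T q)) Q x1 x2
             \<longrightarrow> internal_vertices P \<inter> internal_vertices Q = {})"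
      using ci unfolding completely_independent_def by (elim conjE)
    from spec[OF spec[OF this, of i], of j] show ?thesis
      by (rule conjunct1[OF mp[OF _ conjI[OF that]]])
  qed
  have inj: "inj_on f {..<k}"
  proof (rule inj_onI)
    fix i j assume ij: "i \<in> {..<k}" "j \<in> {..<k}" "f i = f j"
    show "i = j"
    proof (rule ccontr)
      assume "i \<noteq> j"
      then consider "i < j" | "j < i" by linarith
      then show False
      proof cases
        case 1
        have "i < k" "j < k" using ij by auto
        then have "f i \<in> snd (T i)" "f i \<in> snd (T j)" using fi ij(3) by metis+
        then show False using disj[OF 1 \<open>j < k\<close>] by blast
      next
        case 2
        have "i < k" "j < k" using ij by auto
        then have "f i \<in> snd (T i)" "f i \<in> snd (T j)" using fi ij(3) by metis+
        then show False using disj[OF 2 \<open>i < k\<close>] by blast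
      qed
    qed
  qed
  have "f ` {..<k} \<subseteq> E" using fi sub by blast
  from card_inj_on_le[OF inj this finE] show ?thesis by simp
qed

lemma kS_props:
  assumes sg: "simple_graph V E" and xy: "x \<in> S" "y \<in> S" "x \<noteq> y"
  shows "\<And>m T. completely_independent V E S m T \<Longrightarrow> m \<le> kappa_star_S V E S"
    and "\<exists>T. completely_independent V E S (kappa_star_S V E S) T"
proof -
  let ?K = "{k. \<exists>T. completely_independent V E S k T}"
  have fin: "finite ?K"
  proof (rule finite_subset)
    show "?K \<subseteq> {..card E}" using ci_bound[OF sg xy] by blast
  qed simp
  have "0 \<in> ?K" unfolding completely_independent_def by simp
  then have nem: "?K \<noteq> {}" by blast
  show "\<And>m T. completely_independent V E S m T \<Longrightarrow> m \<le> kappa_star_S V E S"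
    unfolding kappa_star_S_def using Max_ge[OF fin] by blast
  show "\<exists>T. completely_independent V E S (kappa_star_S V E S) T"
    unfolding kappa_star_S_def using Max_in[OF fin nem] by blast
qed

lemma kS_step:
  assumes sg: "simple_graph V E" and xy: "x \<in> S" "y \<in> S" "x \<noteq> y" and vS: "v \<notin> S"
  shows "kappa_star_S V E (insert v S) \<le> kappa_star_S V E S"
proof -
  obtain T where T: "completely_independent V E (insert v S) (kappa_star_S V E (insert v S)) T"
    using kS_props(2)[OF sg, of x "insert v S" y] xy by blast
  have "completely_independent V E S (kappa_star_S V E (insert v S)) (\<lambda>i. prune S (T i))"
    using prune_family[OF T vS] xy by blast
  then show ?thesis using kS_props(1)[OF sg xy] by blast
qed

lemma kS_extend:
  assumes sg: "simple_graph V E" and SV: "S \<subseteq> V" and cS: "2 \<le> card S"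
  shows "card S + n \<le> card V \<Longrightarrow> \<exists>S'. S \<subseteq> S' \<and> S' \<subseteq> V \<and> card S' = card S + n \<and>
      kappa_star_S V E S' \<le> kappa_star_S V E S"
proof (induction n)
  case 0
  show ?case using SV by (intro exI[of _ S]) simp
next
  case (Suc n)
  have "card S + n \<le> card V" using Suc.prems by simp
  then obtain S' where S': "S \<subseteq> S'" "S' \<subseteq> V" "card S' = card S + n"
      "kappa_star_S V E S' \<le> kappa_star_S V E S" using Suc.IH by blast
  have finV: "finite V" using sg unfolding simple_graph_def by blast
  have finS': "finite S'" using S'(2) finV finite_subset by blast
  have "\<not> V \<subseteq> S'"
  proof
    assume "V \<subseteq> S'"
    then have "card V \<le> card S'" using card_mono[OF finS'] by blast
    then show False using Suc.prems S'(3) by simp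
  qed
  then obtain v where v: "v \<in> V" "v \<notin> S'" by blast
  have "2 \<le> card S'" using S'(3) cS by simp
  then have "S' \<noteq> {}" by auto
  then obtain x where x: "x \<in> S'" by blast
  have "card (S' - {x}) \<ge> 1" using card_Diff_singleton[OF x] \<open>2 \<le> card S'\<close> by simp
  then have "S' - {x} \<noteq> {}" by (metis card.empty not_one_le_zero)
  then obtain y where y: "y \<in> S'" "y \<noteq> x" by blast
  have xy: "x \<in> S'" "y \<in> S'" "x \<noteq> y" using x y by auto
  have "kappa_star_S V E (insert v S') \<le> kappa_star_S V E S'" using kS_step[OF sg xy v(2)] .
  moreover have "card (insert v S') = card S + Suc n" using S'(3) v(2) finS' by simp
  ultimately have f1: "kappa_star_S V E (insert v S') \<le> kappa_star_S V E S"
    and f2: "card (insert v S') = card S + Suc n" using S'(4) by auto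
  have f3: "S \<subseteq> insert v S'" and f4: "insert v S' \<subseteq> V" using S'(1,2) v(1) by auto
  show ?case by (rule exI[of _ "insert v S'"]) (intro conjI f1 f2 f3 f4)
qed

theorem corollary2p3:
  fixes V :: "'a set" and E :: "'a set set" and k l :: nat
  assumes "simple_graph V E" and "graph_connected V E"
    and "2 \<le> k" and "k \<le> l" and "l \<le> card V"
  shows "kappa_star V E k \<ge> kappa_star V E l"
proof -
  have finV: "finite V" using assms(1) unfolding simple_graph_def by blast
  define A where "A j = {kappa_star_S V E S | S. S \<subseteq> V \<and> card S = j}" for j
  have finA: "finite (A j)" for j
  proof -
    have "A j \<subseteq> kappa_star_S V E ` Pow V" unfolding A_def by blast
    then show ?thesis using finV by (meson finite_Pow_iff finite_imageI finite_subset)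
  qed
  obtain S0 where S0: "S0 \<subseteq> V" "card S0 = k" using obtain_subset_with_card_n[of k V] assms(4,5) by auto
  have "A k \<noteq> {}" using S0 unfolding A_def by blast
  then have "kappa_star V E k \<in> A k" unfolding kappa_star_def A_def[symmetric] using Min_in[OF finA] by blast
  then obtain S where S: "S \<subseteq> V" "card S = k" "kappa_star V E k = kappa_star_S V E S"
    unfolding A_def by blast
  obtain S' where S': "S' \<subseteq> V" "card S' = l" "kappa_star_S V E S' \<le> kappa_star_S V E S"
  proof -
    have cS: "2 \<le> card S" using S(2) assms(3) by simp
    have "card S + (l - k) \<le> card V" using S(2) assms(4,5) by simp
    from kS_extend[OF assms(1) S(1) cS this] obtain S' where
      "S \<subseteq> S'" "S' \<subseteq> V" "card S' = card S + (l - k)" "kappa_star_S V E S' \<le> kappa_star_S V E S"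
      by blast
    moreover have "card S + (l - k) = l" using S(2) assms(4) by simp
    ultimately show ?thesis using that by simp
  qed
  have inA: "kappa_star_S V E S' \<in> A l" unfolding A_def
    by (rule CollectI, rule exI[of _ S']) (simp add: S'(1,2))
  have eqA: "kappa_star V E j = Min (A j)" for j unfolding kappa_star_def A_def by (rule refl)
  from Min_le[OF finA inA] have "kappa_star V E l \<le> kappa_star_S V E S'"
    unfolding eqA .
  then have "kappa_star V E l \<le> kappa_star_S V E S" using S'(3) by (rule order_trans)
  then show ?thesis unfolding S(3) .
qed

end
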